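(* Let $M$ be an $n\times n$ primitive Boolean matrix with Boolean rank $b(M)=2$. Then $k(M)=2$ if and only if $M$ has a Boolean rank factorization $M=AB$ (with $A$ an $n\times 2$ and $B$ a $2\times n$ Boolean matrix) such that: (i) $BA=W_2$ or $BA=J_2$, where $W_2=\left[\begin{array}{cc}1&1\\1&0\end{array}\right]$ and $J_2=\left[\begin{array}{cc}1&1\\1&1\end{array}\right]$; (ii) some row of $A$ equals $e_1^t(2)$ and some row of $A$ equals $e_2^t(2)$; (iii) no column of $B$ equals $e_1(2)+e_2(2)$.
   Context: Boolean matrices are $(0,1)$-matrices with Boolean arithmetic ($1+1=1$). A square Boolean matrix is primitive if some power has all entries $1$; its scrambling index $k(M)$ is the smallest positive integer $k$ such that any two rows of $M^k$ have a $1$ in a common position (equivalently $M^k(M^t)^k=J$). The Boolean rank $b(M)$ is the smallest $b$ with $M=AB$, $A$ of size $n\times b$ and $B$ of size $b\times n$ Boolean; such a factorization is a Boolean rank factorization. $e_i(2)$ denotes the $i$th column of the $2\times 2$ identity matrix. *)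

theory Defs
  imports Main
begin

text \<open>Boolean matrices are represented as functions nat => nat => bool;
  dimensions are carried explicitly and only entries with in-range indices matter.\<close>

definition bmult :: "nat \<Rightarrow> (nat \<Rightarrow> nat \<Rightarrow> bool) \<Rightarrow> (nat \<Rightarrow> nat \<Rightarrow> bool) \<Rightarrow> (nat \<Rightarrow> nat \<Rightarrow> bool)" where
  "bmult m A B = (\<lambda>i j. \<exists>k<m. A i k \<and> B k j)"

fun bpow :: "nat \<Rightarrow> (nat \<Rightarrow> nat \<Rightarrow> bool) \<Rightarrow> nat \<Rightarrow> (nat \<Rightarrow> nat \<Rightarrow> bool)" where
  "bpow n M 0 = (\<lambda>i j. i = j)"
| "bpow n M (Suc k) = bmult n (bpow n M k) M"

definition primitive :: "nat \<Rightarrow> (nat \<Rightarrow> nat \<Rightarrow> bool) \<Rightarrow> bool" where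
  "primitive n M = (\<exists>k>0. \<forall>i<n. \<forall>j<n. bpow n M k i j)"

definition scrambles :: "nat \<Rightarrow> (nat \<Rightarrow> nat \<Rightarrow> bool) \<Rightarrow> nat \<Rightarrow> bool" where
  "scrambles n M k = (\<forall>i<n. \<forall>j<n. \<exists>l<n. bpow n M k i l \<and> bpow n M k j l)"

definition scrambling_index :: "nat \<Rightarrow> (nat \<Rightarrow> nat \<Rightarrow> bool) \<Rightarrow> nat" where
  "scrambling_index n M = (LEAST k. k > 0 \<and> scrambles n M k)"

definition is_bfact :: "nat \<Rightarrow> nat \<Rightarrow> (nat \<Rightarrow> nat \<Rightarrow> bool) \<Rightarrow> (nat \<Rightarrow> nat \<Rightarrow> bool) \<Rightarrow> (nat \<Rightarrow> nat \<Rightarrow> bool) \<Rightarrow> bool" where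
  "is_bfact n b M A B = (\<forall>i<n. \<forall>j<n. M i j = bmult b A B i j)"

definition boolean_rank :: "nat \<Rightarrow> (nat \<Rightarrow> nat \<Rightarrow> bool) \<Rightarrow> nat" where
  "boolean_rank n M = (LEAST b. \<exists>A B. is_bfact n b M A B)"

definition W2 :: "nat \<Rightarrow> nat \<Rightarrow> bool" where
  "W2 = (\<lambda>i j. \<not> (i = 1 \<and> j = 1))"

definition J2 :: "nat \<Rightarrow> nat \<Rightarrow> bool" where
  "J2 = (\<lambda>i j. True)"

definition mat2_eq :: "(nat \<Rightarrow> nat \<Rightarrow> bool) \<Rightarrow> (nat \<Rightarrow> nat \<Rightarrow> bool) \<Rightarrow> bool" where
  "mat2_eq X Y = (\<forall>i<2. \<forall>j<2. X i j = Y i j)"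

end

theory Submission
  imports Defs
begin

lemma all2: "(\<forall>i<(2::nat). P i) \<longleftrightarrow> P 0 \<and> P 1"
  by (auto simp: less_2_cases_iff)

lemma bf2: "is_bfact n 2 M A B \<Longrightarrow> i<n \<Longrightarrow> j<n \<Longrightarrow>
   M i j = ((A i 0 \<and> B 0 j) \<or> (A i 1 \<and> B 1 j))"
  unfolding is_bfact_def bmult_def by (auto simp: less_2_cases_iff)

lemma bpow1: "i<n \<Longrightarrow> j<n \<Longrightarrow> bpow n M 1 i j = M i j"
  by (auto simp: bmult_def)

lemma bpowL: "i<n \<Longrightarrow> j<n \<Longrightarrow> bpow n M (Suc m) i j = (\<exists>k<n. M i k \<and> bpow n M m k j)"
proof (induction m arbitrary: j)
  case 0
  then show ?case by (auto simp: bmult_def)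
next
  case (Suc m)
  have "bpow n M (Suc (Suc m)) i j = (\<exists>l<n. bpow n M (Suc m) i l \<and> M l j)"
    by (simp add: bmult_def)
  also have "\<dots> = (\<exists>l<n. (\<exists>k<n. M i k \<and> bpow n M m k l) \<and> M l j)"
  proof -
    have eq: "\<And>l. l<n \<Longrightarrow> bpow n M (Suc m) i l = (\<exists>k<n. M i k \<and> bpow n M m k l)"
      using Suc.IH Suc.prems by blast
    show ?thesis using eq by auto
  qed
  also have "\<dots> = (\<exists>k<n. M i k \<and> bpow n M (Suc m) k j)"
    by (auto simp: bmult_def)
  finally show ?case .
qed

lemma bpow2: "i<n \<Longrightarrow> j<n \<Longrightarrow> bpow n M 2 i j = (\<exists>k<n. M i k \<and> M k j)"
proof -
  assume a: "i<n" "j<n"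
  have "bpow n M 2 i j = bpow n M (Suc 1) i j" by (simp only: Suc_1)
  also have "\<dots> = (\<exists>k<n. M i k \<and> bpow n M 1 k j)" using bpowL[OF a] by blast
  also have "\<dots> = (\<exists>k<n. M i k \<and> M k j)" using bpow1 a by blast
  finally show ?thesis .
qed

lemma stuck0:
  assumes f: "is_bfact n 2 M A B" and i: "i<n" "\<not> A i 1"
    and c: "\<forall>k<n. B 0 k \<longrightarrow> \<not> A k 1" and j: "j1<n" "\<not> B 0 j1"
  shows "\<not> bpow n M (Suc m) i j1"
proof -
  have inv: "\<forall>l<n. bpow n M m i l \<longrightarrow> (l = i \<or> B 0 l)"
  proof (induction m)
    case 0 then show ?case by simp
  next
    case (Suc m)
    show ?case
    proof (intro allI impI)
      fix l assume l: "l<n" "bpow n M (Suc m) i l"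
      then obtain k where k: "k<n" "bpow n M m i k" "M k l" by (auto simp: bmult_def)
      have "\<not> A k 1" using Suc k i c by blast
      then show "l = i \<or> B 0 l" using bf2[OF f k(1) l(1)] k by auto
    qed
  qed
  show ?thesis
  proof
    assume "bpow n M (Suc m) i j1"
    then obtain k where k: "k<n" "bpow n M m i k" "M k j1" by (auto simp: bmult_def)
    have "\<not> A k 1" using inv k i c by blast
    then show False using bf2[OF f k(1) j(1)] k j by auto
  qed
qed

lemma stuck1:
  assumes f: "is_bfact n 2 M A B" and i: "i<n" "\<not> A i 0"
    and c: "\<forall>k<n. B 1 k \<longrightarrow> \<not> A k 0" and j: "j1<n" "\<not> B 1 j1"
  shows "\<not> bpow n M (Suc m) i j1"
proof -
  have inv: "\<forall>l<n. bpow n M m i l \<longrightarrow> (l = i \<or> B 1 l)"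
  proof (induction m)
    case 0 then show ?case by simp
  next
    case (Suc m)
    show ?case
    proof (intro allI impI)
      fix l assume l: "l<n" "bpow n M (Suc m) i l"
      then obtain k where k: "k<n" "bpow n M m i k" "M k l" by (auto simp: bmult_def)
      have "\<not> A k 0" using Suc k i c by blast
      then show "l = i \<or> B 1 l" using bf2[OF f k(1) l(1)] k by auto
    qed
  qed
  show ?thesis
  proof
    assume "bpow n M (Suc m) i j1"
    then obtain k where k: "k<n" "bpow n M m i k" "M k j1" by (auto simp: bmult_def)
    have "\<not> A k 0" using inv k i c by blast
    then show False using bf2[OF f k(1) j(1)] k j by auto
  qed
qed

lemma rownz:
  assumes p: "primitive n M" and f: "is_bfact n 2 M A B" and i: "i<n"
  shows "A i 0 \<or> A i 1"
proof (rule ccontr)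
  assume na: "\<not> (A i 0 \<or> A i 1)"
  obtain k where k: "k>0" "\<forall>i<n. \<forall>j<n. bpow n M k i j" using p by (auto simp: primitive_def)
  then obtain m where m: "k = Suc m" using gr0_conv_Suc by blast
  have "bpow n M (Suc m) i i" using k m i by auto
  then obtain l where "l<n" "M i l" using bpowL[OF i i] by auto
  then show False using bf2[OF f i] na by auto
qed

lemma good:
  assumes f: "is_bfact n 2 M A B"
    and r1: "\<exists>i<n. A i 0 \<and> \<not> A i 1" and r2: "\<exists>i<n. \<not> A i 0 \<and> A i 1"
    and d: "\<not> (\<exists>j<n. B 0 j \<and> B 1 j)"
    and c00: "\<exists>k<n. B 0 k \<and> A k 0" and c01: "\<exists>k<n. B 0 k \<and> A k 1"
    and c10: "\<exists>k<n. B 1 k \<and> A k 0"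
  shows "\<exists>A B. is_bfact n 2 M A B
       \<and> (mat2_eq (bmult n B A) W2 \<or> mat2_eq (bmult n B A) J2)
       \<and> (\<exists>i<n. A i 0 \<and> \<not> A i 1) \<and> (\<exists>i<n. \<not> A i 0 \<and> A i 1)
       \<and> \<not> (\<exists>j<n. B 0 j \<and> B 1 j)"
proof -
  have "mat2_eq (bmult n B A) W2 \<or> mat2_eq (bmult n B A) J2"
    unfolding mat2_eq_def W2_def J2_def all2 using c00 c01 c10
    by (auto simp: bmult_def)
  then show ?thesis using f r1 r2 d by blast
qed

theorem theorem2p8:
  fixes n :: nat and M :: "nat \<Rightarrow> nat \<Rightarrow> bool"
  assumes "primitive n M" and "boolean_rank n M = 2"
  shows "scrambling_index n M = 2 \<longleftrightarrow>
    (\<exists>A B. is_bfact n 2 M A B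
       \<and> (mat2_eq (bmult n B A) W2 \<or> mat2_eq (bmult n B A) J2)
       \<and> (\<exists>i<n. A i 0 \<and> \<not> A i 1) \<and> (\<exists>i<n. \<not> A i 0 \<and> A i 1)
       \<and> \<not> (\<exists>j<n. B 0 j \<and> B 1 j))"
proof
  assume SI: "scrambling_index n M = 2"
  obtain kp where kp: "kp>0" "\<forall>i<n. \<forall>j<n. bpow n M kp i j"
    using assms(1) by (auto simp: primitive_def)
  have sex: "\<exists>k. k>0 \<and> scrambles n M k"
    using kp unfolding scrambles_def by blast
  have s2: "scrambles n M 2"
    using LeastI_ex[OF sex] SI unfolding scrambling_index_def by simp
  have ns1: "\<not> scrambles n M 1"
  proof
    assume "scrambles n M 1"
    then have "scrambling_index n M \<le> 1" unfolding scrambling_index_def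
      by (intro Least_le) simp
    then show False using SI by simp
  qed
  have ex: "\<exists>b A B. is_bfact n b M A B"
    by (rule exI[of _ n], rule exI[of _ M], rule exI[of _ "\<lambda>k j. k = j"])
       (auto simp: is_bfact_def bmult_def)
  have "\<exists>A B. is_bfact n (boolean_rank n M) M A B"
    unfolding boolean_rank_def by (rule LeastI_ex[OF ex])
  then obtain A B where f: "is_bfact n 2 M A B" using assms(2) by auto
  have no1: "\<not> is_bfact n 1 M A' B'" for A' B'
  proof
    assume "is_bfact n 1 M A' B'"
    then have "boolean_rank n M \<le> 1" unfolding boolean_rank_def
      by (intro Least_le) blast
    then show False using assms(2) by simp
  qed
  have b0: "\<exists>j<n. B 0 j"
  proof (rule ccontr)
    assume "\<not> (\<exists>j<n. B 0 j)"
    then have "is_bfact n 1 M (\<lambda>i u. A i 1) (\<lambda>u j. B 1 j)"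
      using bf2[OF f] unfolding is_bfact_def bmult_def by auto
    then show False using no1 by blast
  qed
  have b1: "\<exists>j<n. B 1 j"
  proof (rule ccontr)
    assume "\<not> (\<exists>j<n. B 1 j)"
    then have "is_bfact n 1 M (\<lambda>i u. A i 0) (\<lambda>u j. B 0 j)"
      using bf2[OF f] unfolding is_bfact_def bmult_def by auto
    then show False using no1 by blast
  qed
  have nz: "\<And>i. i<n \<Longrightarrow> A i 0 \<or> A i 1" using rownz[OF assms(1) f] by blast
  obtain p q where pq0: "p<n" "q<n" "\<forall>l<n. \<not> (bpow n M 1 p l \<and> bpow n M 1 q l)"
    using ns1 unfolding scrambles_def by blast
  have pq: "p<n" "q<n" "\<forall>l<n. \<not> (M p l \<and> M q l)"
    using pq0 bpow1[of p n _ M] bpow1[of q n _ M] by auto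
  have d: "\<not> (\<exists>j<n. B 0 j \<and> B 1 j)"
  proof
    assume "\<exists>j<n. B 0 j \<and> B 1 j"
    then obtain j where "j<n" "B 0 j" "B 1 j" by blast
    then show False using pq nz[of p] nz[of q] bf2[OF f] by blast
  qed
  have disj: "\<not> (A p u \<and> A q u)" if "u<2" for u
  proof
    assume a: "A p u \<and> A q u"
    have "u = 0 \<or> u = 1" using that by (auto simp: less_2_cases_iff)
    then obtain l where "l<n" "B u l" using b0 b1 by blast
    then show False using pq a bf2[OF f] that by (auto simp: less_2_cases_iff)
  qed
  have r1: "\<exists>i<n. A i 0 \<and> \<not> A i 1" and r2: "\<exists>i<n. \<not> A i 0 \<and> A i 1"
    using disj[of 0] disj[of 1] nz[of p] nz[of q] pq by auto
  then obtain i1 i2 where i1: "i1<n" "A i1 0" "\<not> A i1 1" and i2: "i2<n" "\<not> A i2 0" "A i2 1"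
    by blast
  obtain m where m: "kp = Suc m" using kp gr0_conv_Suc by blast
  have c01: "\<exists>k<n. B 0 k \<and> A k 1"
  proof (rule ccontr)
    assume "\<not> ?thesis"
    then have c: "\<forall>k<n. B 0 k \<longrightarrow> \<not> A k 1" by blast
    obtain j1 where "j1<n" "B 1 j1" using b1 by blast
    then have "\<not> bpow n M (Suc m) i1 j1" using stuck0[OF f i1(1) i1(3) c] d by blast
    then show False using kp m i1 \<open>j1<n\<close> by blast
  qed
  have c10: "\<exists>k<n. B 1 k \<and> A k 0"
  proof (rule ccontr)
    assume "\<not> ?thesis"
    then have c: "\<forall>k<n. B 1 k \<longrightarrow> \<not> A k 0" by blast
    obtain j1 where "j1<n" "B 0 j1" using b0 by blast
    then have "\<not> bpow n M (Suc m) i2 j1" using stuck1[OF f i2(1) i2(2) c] d by blast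
    then show False using kp m i2 \<open>j1<n\<close> by blast
  qed
  obtain l where l: "l<n" "bpow n M 2 i1 l" "bpow n M 2 i2 l"
    using s2 i1 i2 unfolding scrambles_def by blast
  obtain k where k: "k<n" "M i1 k" "M k l"
    using bpow2[OF i1(1) l(1), of M] l(2) by blast
  obtain k' where k': "k'<n" "M i2 k'" "M k' l"
    using bpow2[OF i2(1) l(1), of M] l(3) by blast
  have bk: "B 0 k" using bf2[OF f i1(1) k(1)] k(2) i1 by simp
  have bk': "B 1 k'" using bf2[OF f i2(1) k'(1)] k'(2) i2 by simp
  have e1: "(A k 0 \<and> B 0 l) \<or> (A k 1 \<and> B 1 l)" using bf2[OF f k(1) l(1)] k(3) by simp
  have e2: "(A k' 0 \<and> B 0 l) \<or> (A k' 1 \<and> B 1 l)" using bf2[OF f k'(1) l(1)] k'(3) by simp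
  have u: "(\<exists>k<n. B 0 k \<and> A k 0) \<and> (\<exists>k<n. B 1 k \<and> A k 0) \<or>
             (\<exists>k<n. B 0 k \<and> A k 1) \<and> (\<exists>k<n. B 1 k \<and> A k 1)"
  proof (cases "B 0 l")
    case True
    then have "\<not> B 1 l" using d l(1) by blast
    then show ?thesis using e1 e2 k(1) k'(1) bk bk' by blast
  next
    case False
    then show ?thesis using e1 e2 k(1) k'(1) bk bk' by blast
  qed
  show "\<exists>A B. is_bfact n 2 M A B
       \<and> (mat2_eq (bmult n B A) W2 \<or> mat2_eq (bmult n B A) J2)
       \<and> (\<exists>i<n. A i 0 \<and> \<not> A i 1) \<and> (\<exists>i<n. \<not> A i 0 \<and> A i 1)
       \<and> \<not> (\<exists>j<n. B 0 j \<and> B 1 j)"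
  proof (cases "\<exists>k<n. B 0 k \<and> A k 0")
    case True
    then show ?thesis using good[OF f r1 r2 d True c01 c10] by blast
  next
    case False
    then have c11: "\<exists>k<n. B 1 k \<and> A k 1" using u by blast
    define A' where "A' = (\<lambda>i u. A i (1 - u))"
    define B' where "B' = (\<lambda>u j. B (1 - u) j)"
    have f': "is_bfact n 2 M A' B'"
      using bf2[OF f] unfolding is_bfact_def bmult_def A'_def B'_def
      by (auto simp: less_2_cases_iff)
    show ?thesis
      by (rule good[OF f']) (use r1 r2 d c11 c01 c10 in \<open>auto simp: A'_def B'_def\<close>)
  qed
next
  assume H: "\<exists>A B. is_bfact n 2 M A B
       \<and> (mat2_eq (bmult n B A) W2 \<or> mat2_eq (bmult n B A) J2)
       \<and> (\<exists>i<n. A i 0 \<and> \<not> A i 1) \<and> (\<exists>i<n. \<not> A i 0 \<and> A i 1)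
       \<and> \<not> (\<exists>j<n. B 0 j \<and> B 1 j)"
  then obtain A B i1 i2 where f: "is_bfact n 2 M A B"
    and C: "mat2_eq (bmult n B A) W2 \<or> mat2_eq (bmult n B A) J2"
    and i1: "i1<n" "A i1 0" "\<not> A i1 1" and i2: "i2<n" "\<not> A i2 0" "A i2 1"
    and d: "\<not> (\<exists>j<n. B 0 j \<and> B 1 j)" by blast
  have c00: "\<exists>k<n. B 0 k \<and> A k 0" and c10: "\<exists>k<n. B 1 k \<and> A k 0"
    using C unfolding mat2_eq_def W2_def J2_def all2 by (auto simp: bmult_def)
  then obtain l where l: "l<n" "B 0 l" by blast
  have s2: "scrambles n M 2"
    unfolding scrambles_def
  proof (intro allI impI)
    have row: "bpow n M 2 i l" if i: "i<n" for i
    proof -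
      have "A i 0 \<or> A i 1" using rownz[OF assms(1) f i] .
      then obtain u where u: "u = 0 \<or> u = 1" "A i u" by blast
      obtain k where k: "k<n" "B u k" "A k 0" using c00 c10 u by blast
      have "M i k" using bf2[OF f i k(1)] u k by auto
      moreover have "M k l" using bf2[OF f k(1) l(1)] k l by auto
      ultimately show ?thesis using bpow2[OF i l(1)] k by blast
    qed
    fix i j assume "i<n" "j<n"
    then show "\<exists>l<n. bpow n M 2 i l \<and> bpow n M 2 j l" using row l by blast
  qed
  have ns1: "\<not> scrambles n M 1"
  proof
    assume "scrambles n M 1"
    then obtain l where l: "l<n" "bpow n M 1 i1 l" "bpow n M 1 i2 l"
      using i1 i2 unfolding scrambles_def by blast
    then have "M i1 l" "M i2 l" using bpow1 i1 i2 by auto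
    then show False using bf2[OF f i1(1) l(1)] bf2[OF f i2(1) l(1)] i1 i2 d l by auto
  qed
  show "scrambling_index n M = 2"
    unfolding scrambling_index_def
  proof (rule Least_equality)
    show "0 < (2::nat) \<and> scrambles n M 2" using s2 by simp
  next
    fix k assume "0 < k \<and> scrambles n M k"
    then show "2 \<le> k" using ns1 by (cases "k = 1") auto
  qed
qed

end
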